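(* Let $\Phi_{usc}=\{(X,f):\,X\subseteq\mathbb{R}^d\text{ closed},\ f:X\rightarrow\overline{\mathbb{R}}\text{ upper semi-continuous}\}$, topologized via the bijection $\tau:(X,f)\mapsto\{(x,t)\in X\times\overline{\mathbb{R}}:\,t\leq f(x)\}$ onto the family $\mathcal{U}_{cl}$ of closed sets $A\subseteq\mathbb{R}^d\times\overline{\mathbb{R}}$ satisfying: for all $x\in\mathbb{R}^d$ and $t\in\overline{\mathbb{R}}$, $(x,t)\in A$ implies $\{x\}\times[-\infty,t]\subseteq A$. Then $\Phi_{usc}$ is compact in the topology induced by $\mathcal{U}_{cl}$.
   Context: $\overline{\mathbb{R}}=[-\infty,\infty]$ is the extended real line. $\mathcal{U}_{cl}$ carries the topology it inherits as a subspace of the space $\mathcal{F}(\mathbb{R}^d\times\overline{\mathbb{R}})$ of all closed subsets of $\mathbb{R}^d\times\overline{\mathbb{R}}$ equipped with the Fell (hit-or-miss) topology; $\Phi_{usc}$ carries the topology making $\tau$ a homeomorphism. *)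

theory Defs
  imports "HOL-Analysis.Analysis" "HOL-Library.Extended_Real"
begin

definition usc_on :: "('a::topological_space) set \<Rightarrow> ('a \<Rightarrow> ereal) \<Rightarrow> bool" where
  "usc_on X f \<longleftrightarrow> (\<forall>a. openin (top_of_set X) {x \<in> X. f x < a})"

definition fell_topology :: "('a::topological_space) set topology" where
  "fell_topology = subtopology
     (topology_generated_by
        ({{F. F \<inter> K = {}} | K. compact K} \<union> {{F. F \<inter> G \<noteq> {}} | G. open G}))
     {F. closed F}"

text \<open>Functions are represented extensionally: f is fixed to be -infinity outside X,
  so that (X, f) corresponds exactly to a function on X.\<close>
definition Phi_usc :: "((real^'n) set \<times> ((real^'n) \<Rightarrow> ereal)) set" where
  "Phi_usc = {(X, f). closed X \<and> usc_on X f \<and> (\<forall>x. x \<notin> X \<longrightarrow> f x = -\<infinity>)}"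

definition tau :: "(real^'n) set \<times> ((real^'n) \<Rightarrow> ereal) \<Rightarrow> ((real^'n) \<times> ereal) set" where
  "tau p = {(x, t). x \<in> fst p \<and> t \<le> snd p x}"

definition U_cl :: "((real^'n) \<times> ereal) set set" where
  "U_cl = {A. closed A \<and> (\<forall>x t. (x, t) \<in> A \<longrightarrow> {x} \<times> {-\<infinity>..t} \<subseteq> A)}"

definition Phi_usc_topology :: "((real^'n) set \<times> ((real^'n) \<Rightarrow> ereal)) topology" where
  "Phi_usc_topology = pullback_topology Phi_usc tau (subtopology fell_topology U_cl)"

end

theory Submission
  imports Defs
begin

lemma up_open:
  fixes G :: "('a::topological_space \<times> ereal) set"
  assumes "open G"
  shows "open {(x,t). \<exists>s\<le>t. (x,s)\<in>G}"
proof (rule Topological_Spaces.openI)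
  fix p assume "p \<in> {(x,t). \<exists>s\<le>t. (x,s)\<in>G}"
  then obtain x t s where p: "p = (x,t)" "s \<le> t" "(x,s) \<in> G" by auto
  obtain U V where UV: "open U" "open V" "(x,s) \<in> U \<times> V" "U \<times> V \<subseteq> G"
    using open_prod_elim[OF assms p(3)] by metis
  show "\<exists>T. open T \<and> p \<in> T \<and> T \<subseteq> {(x,t). \<exists>s\<le>t. (x,s)\<in>G}"
  proof (intro exI conjI)
    show "open (U \<times> (V \<union> {s<..}))" using UV by (intro open_Times open_Un) auto
    show "p \<in> U \<times> (V \<union> {s<..})" using p UV by (cases "s = t") auto
    show "U \<times> (V \<union> {s<..}) \<subseteq> {(x,t). \<exists>s\<le>t. (x,s)\<in>G}"
    proof clarify
      fix y t' assume y: "y \<in> U" "t' \<in> V \<union> {s<..}"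
      show "\<exists>s'\<le>t'. (y,s') \<in> G"
      proof (cases "t' \<in> V")
        case True then show ?thesis using y UV by (intro exI[of _ t']) auto
      next
        case False then show ?thesis using y UV by (intro exI[of _ s]) auto
      qed
    qed
  qed
qed

lemma compact_space_pullback:
  assumes "compact_space T" "topspace T \<subseteq> f ` A"
  shows "compact_space (pullback_topology A f T)"
  unfolding compact_space_alt
proof (intro allI impI)
  fix \<U> assume H: "(\<forall>U\<in>\<U>. openin (pullback_topology A f T) U) \<and> topspace (pullback_topology A f T) \<subseteq> \<Union>\<U>"
  then have "\<forall>U\<in>\<U>. \<exists>W. openin T W \<and> U = f-`W \<inter> A" by (simp add: openin_pullback_topology)
  then obtain W where W: "\<And>U. U\<in>\<U> \<Longrightarrow> openin T (W U) \<and> U = f-`(W U) \<inter> A" by metis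
  have "topspace T \<subseteq> \<Union>(W ` \<U>)"
  proof
    fix y assume y: "y \<in> topspace T"
    then obtain a where a: "a \<in> A" "y = f a" using assms(2) by auto
    then have "a \<in> topspace (pullback_topology A f T)" using y by (simp add: topspace_pullback_topology)
    then obtain U where "U \<in> \<U>" "a \<in> U" using H by auto
    then show "y \<in> \<Union>(W ` \<U>)" using W a by auto
  qed
  then obtain \<F> where F: "finite \<F>" "\<F> \<subseteq> W ` \<U>" "topspace T \<subseteq> \<Union>\<F>"
    using assms(1) W unfolding compact_space_alt by (metis (no_types, lifting) image_iff)
  then obtain \<G> where G: "\<G> \<subseteq> \<U>" "finite \<G>" "\<F> = W ` \<G>"
    by (meson finite_subset_image)
  show "\<exists>\<F>. finite \<F> \<and> \<F> \<subseteq> \<U> \<and> topspace (pullback_topology A f T) \<subseteq> \<Union>\<F>"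
  proof (intro exI conjI)
    show "topspace (pullback_topology A f T) \<subseteq> \<Union>\<G>"
    proof
      fix a assume a: "a \<in> topspace (pullback_topology A f T)"
      then have "f a \<in> topspace T" "a \<in> A" by (auto simp: topspace_pullback_topology)
      then obtain U where "U \<in> \<G>" "f a \<in> W U" using F G by auto
      then show "a \<in> \<Union>\<G>" using W G \<open>a \<in> A\<close> by auto
    qed
  qed (use G in auto)
qed

lemma U_cl_surj: "(U_cl :: ((real^'n) \<times> ereal) set set) \<subseteq> tau ` Phi_usc"
proof
  fix A :: "((real^'n) \<times> ereal) set" assume "A \<in> U_cl"
  then have Acl: "closed A" and Ad0: "\<forall>x t. (x, t) \<in> A \<longrightarrow> {x} \<times> {-\<infinity>..t} \<subseteq> A"
    unfolding U_cl_def by auto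
  have Ad: "(x,s) \<in> A" if "(x,t) \<in> A" "s \<le> t" for x t s
  proof -
    have "(x,s) \<in> {x} \<times> {-\<infinity>..t}" using that(2) by simp
    then show ?thesis using Ad0 that(1) by blast
  qed
  have cv1: "closed ((\<lambda>t. (x,t)) -` A)" for x :: "real^'n"
    by (rule continuous_closed_vimage[OF Acl]) (intro continuous_intros)
  have cv2: "closed ((\<lambda>x. (x,t)) -` A)" for t :: ereal
    by (rule continuous_closed_vimage[OF Acl]) (intro continuous_intros)
  define X where "X = {x. (x, -\<infinity>) \<in> A}"
  define f where "f x = (if x \<in> X then Sup {t. (x,t) \<in> A} else -\<infinity>)" for x
  have sl: "closed {t. (x,t) \<in> A}" for x
  proof -
    have "{t. (x,t) \<in> A} = (\<lambda>t. (x,t)) -` A" by auto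
    thus ?thesis using cv1 by simp
  qed
  have XA: "x \<in> X" if "(x,t) \<in> A" for x t
  proof -
    have "(x, -\<infinity>) \<in> A" by (rule Ad[OF that]) simp
    then show ?thesis unfolding X_def by simp
  qed
  have fin: "(x, f x) \<in> A" if "x \<in> X" for x
  proof -
    have "x \<in> {x. (x, -\<infinity>) \<in> A}" using that unfolding X_def .
    then have "{t. (x,t) \<in> A} \<noteq> {}" by blast
    then have "Sup {t. (x,t) \<in> A} \<in> {t. (x,t) \<in> A}" by (rule closed_contains_Sup_cl[OF sl])
    then show ?thesis using that unfolding f_def by simp
  qed
  have fle: "t \<le> f x" if "(x,t) \<in> A" for x t
  proof -
    have "x \<in> X" by (rule XA[OF that])
    moreover have "t \<le> Sup {t. (x,t) \<in> A}" by (rule Sup_upper) (simp add: that)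
    ultimately show ?thesis unfolding f_def by simp
  qed
  have "closed X"
  proof -
    have "X = (\<lambda>x. (x, -\<infinity>::ereal)) -` A" by (simp add: X_def vimage_def)
    thus ?thesis using cv2 by simp
  qed
  moreover have "usc_on X f"
    unfolding usc_on_def
  proof
    fix a
    have eq: "{x \<in> X. f x < a} = X \<inter> (- ((\<lambda>x. (x, a)) -` A))"
    proof (intro set_eqI iffI)
      fix x assume x: "x \<in> {x \<in> X. f x < a}"
      have "(x,a) \<notin> A"
      proof
        assume "(x,a) \<in> A"
        then have "a \<le> f x" by (rule fle)
        then show False using x leD by blast
      qed
      then show "x \<in> X \<inter> (- ((\<lambda>x. (x, a)) -` A))" using x by simp
    next
      fix x assume x: "x \<in> X \<inter> (- ((\<lambda>x. (x, a)) -` A))"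
      have "\<not> a \<le> f x"
      proof
        assume "a \<le> f x"
        have "(x, a) \<in> A" by (rule Ad[OF fin \<open>a \<le> f x\<close>]) (use x in simp)
        then show False using x by simp
      qed
      then show "x \<in> {x \<in> X. f x < a}" using x by (simp add: not_le)
    qed
    have "open (- ((\<lambda>x. (x, a)) -` A))" using cv2 by (simp add: open_Compl)
    then show "openin (top_of_set X) {x \<in> X. f x < a}" unfolding eq
      by (simp add: inf_commute openin_open_Int)
  qed
  moreover have "\<forall>x. x \<notin> X \<longrightarrow> f x = -\<infinity>" by (simp add: f_def)
  ultimately have "(X, f) \<in> Phi_usc" by (simp add: Phi_usc_def)
  moreover have "tau (X, f) = A"
  proof (rule set_eqI)
    fix p :: "(real^'n) \<times> ereal"
    obtain x t where p: "p = (x,t)" by (cases p)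
    have "(x,t) \<in> tau (X,f) \<longleftrightarrow> x \<in> X \<and> t \<le> f x" by (simp add: tau_def)
    also have "\<dots> \<longleftrightarrow> (x,t) \<in> A"
    proof
      assume "x \<in> X \<and> t \<le> f x"
      then show "(x,t) \<in> A" using Ad[OF fin] by blast
    next
      assume "(x,t) \<in> A"
      then show "x \<in> X \<and> t \<le> f x" using XA fle by blast
    qed
    finally show "p \<in> tau (X, f) \<longleftrightarrow> p \<in> A" using p by simp
  qed
  ultimately show "A \<in> tau ` Phi_usc" by (metis image_eqI)
qed


lemma Ucl_compact:
  fixes S :: "((real^'n) \<times> ereal) set set set"
  defines "S \<equiv> {{F. F \<inter> K = {}} | K. compact K} \<union> {{F. F \<inter> G \<noteq> {}} | G. open G}"
  shows "compact_space (subtopology (topology_generated_by S) U_cl)"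
proof -
  define B where "B = (\<lambda>s. s \<inter> U_cl) ` S"
  have US: "\<Union>S = UNIV"
  proof -
    have "{F. F \<inter> {} = {}} \<in> {{F. F \<inter> K = {}} | K. compact K}"
      by (rule CollectI, rule exI[of _ "{}"]) auto
    then have "{F. F \<inter> {} = {}} \<in> S" unfolding S_def by (rule UnI1)
    then show ?thesis by auto
  qed
  have UB: "\<Union>B = U_cl" using US unfolding B_def by auto
  define P where "P = arbitrary union_of (finite intersection_of (\<lambda>x. x \<in> B) relative_to U_cl)"
  have Ptop: "istopology P" unfolding P_def by (rule istopology_subbase)
  have Pint: "P (a \<inter> b)" if "P a" "P b" for a b
    using Ptop that unfolding istopology_def by auto
  have Pun: "P (\<Union>K)" if "\<forall>T\<in>K. P T" for K
    using Ptop that unfolding istopology_def by auto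
  have PB: "P b" if "b \<in> B" for b
  proof -
    have "b \<subseteq> U_cl" using that B_def by auto
    have "(finite intersection_of (\<lambda>x. x \<in> B)) b" using that by (simp add: finite_intersection_of_inc)
    then have "(finite intersection_of (\<lambda>x. x \<in> B) relative_to U_cl) b"
      unfolding relative_to_def using \<open>b \<subseteq> U_cl\<close> by (intro exI[of _ b]) auto
    then show ?thesis unfolding P_def by (simp add: arbitrary_union_of_inc)
  qed
  have eqtop: "subtopology (topology_generated_by S) U_cl = topology P"
  proof (rule topology_eq[THEN iffD2], intro allI iffI)
    fix V assume "openin (subtopology (topology_generated_by S) U_cl) V"
    then obtain W where W0: "openin (topology_generated_by S) W" "V = W \<inter> U_cl"
      unfolding openin_subtopology by blast
    have W: "generate_topology_on S W" "V = W \<inter> U_cl"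
      using W0 openin_topology_generated_by_iff by blast+
    have "P (W \<inter> U_cl)" using W(1)
    proof induction
      case Empty
      have "P (\<Union>{})" by (rule Pun) simp
      moreover have "\<Union>{} = {} \<inter> U_cl" by simp
      ultimately show ?case by (rule back_subst)
    next
      case (Int a b)
      have "P ((a \<inter> U_cl) \<inter> (b \<inter> U_cl))" using Int.IH by (rule Pint)
      moreover have "(a \<inter> U_cl) \<inter> (b \<inter> U_cl) = a \<inter> b \<inter> U_cl" by blast
      ultimately show ?case by (rule back_subst)
    next
      case (UN K)
      have "\<forall>T\<in>(\<lambda>k. k \<inter> U_cl) ` K. P T" by (simp add: UN.IH)
      then have "P (\<Union>((\<lambda>k. k \<inter> U_cl) ` K))" by (rule Pun)
      moreover have "\<Union>((\<lambda>k. k \<inter> U_cl) ` K) = (\<Union>K) \<inter> U_cl" by blast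
      ultimately show ?case by (rule back_subst)
    next
      case (Basis s)
      then have "s \<inter> U_cl \<in> B" unfolding B_def by (rule imageI)
      then show ?case by (rule PB)
    qed
    then show "openin (topology P) V" using W(2) topology_inverse'[OF Ptop] by simp
  next
    fix V assume V: "openin (topology P) V"
    show "openin (subtopology (topology_generated_by S) U_cl) V"
    proof (rule minimal_topology_subbase[of "\<lambda>x. x \<in> B" _ U_cl])
      fix b assume "b \<in> B"
      then obtain s where s: "s \<in> S" "b = s \<inter> U_cl" unfolding B_def by blast
      from s(1) have "openin (topology_generated_by S) s"
        unfolding openin_topology_generated_by_iff by (rule generate_topology_on.Basis)
      then show "openin (subtopology (topology_generated_by S) U_cl) b"
        unfolding s(2) by (rule openin_subtopology_Int)
    next
      show "openin (subtopology (topology_generated_by S) U_cl) U_cl"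
      proof -
        have "topspace (topology_generated_by S) = UNIV" using US by simp
        then have "openin (topology_generated_by S) UNIV" using openin_topspace[of "topology_generated_by S"] by simp
        then have "openin (subtopology (topology_generated_by S) U_cl) (UNIV \<inter> U_cl)" by (rule openin_subtopology_Int)
        then show ?thesis by simp
      qed
    next
      show "openin (topology (arbitrary union_of (finite intersection_of (\<lambda>x. x \<in> B) relative_to U_cl))) V"
        using V unfolding P_def .
    qed
  qed
  have tsp: "topspace (subtopology (topology_generated_by S) U_cl) = U_cl"
    using US by simp
  show ?thesis
  proof (rule Alexander_subbase[of B])
    show "topology (arbitrary union_of (finite intersection_of (\<lambda>x. x \<in> B) relative_to \<Union>B)) =
        subtopology (topology_generated_by S) U_cl"
      by (simp only: UB eqtop P_def)
  next
    fix C assume C: "C \<subseteq> B" "\<Union>C = topspace (subtopology (topology_generated_by S) U_cl)"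
    then have CU: "\<Union>C = U_cl" using tsp by simp
    define Gs where "Gs = {G. open G \<and> {F. F \<inter> G \<noteq> {}} \<inter> U_cl \<in> C}"
    define up where "up G = {(x,t). \<exists>s\<le>t. (x::real^'n,s::ereal)\<in>G}" for G
    have upo: "open (up G)" if "open G" for G unfolding up_def using up_open[OF that] .
    define F0 where "F0 = - up (\<Union>Gs)"
    have F0I: "(x,t) \<in> F0 \<longleftrightarrow> (\<forall>s\<le>t. \<forall>G\<in>Gs. (x,s) \<notin> G)" for x t
      unfolding F0_def up_def by blast
    have "open (\<Union>Gs)" unfolding Gs_def by (rule open_Union) blast
    then have "closed F0" unfolding F0_def using upo by (simp add: closed_Compl)
    moreover have "{x} \<times> {-\<infinity>..t} \<subseteq> F0" if xt: "(x,t) \<in> F0" for x t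
    proof
      fix p assume "p \<in> {x} \<times> {-\<infinity>..t}"
      then obtain t' where p: "p = (x,t')" "t' \<le> t" by auto
      have "\<forall>s\<le>t'. \<forall>G\<in>Gs. (x,s) \<notin> G"
      proof (intro allI impI ballI)
        fix s G assume "s \<le> t'" "G \<in> Gs"
        then show "(x,s) \<notin> G" using xt p(2) F0I order_trans by metis
      qed
      then show "p \<in> F0" using p F0I by simp
    qed
    ultimately have "F0 \<in> U_cl" unfolding U_cl_def by blast
    then obtain c where c: "c \<in> C" "F0 \<in> c" using CU by blast
    then have "c \<in> B" using C(1) by blast
    then obtain s where s: "s \<in> S" "c = s \<inter> U_cl" unfolding B_def by blast
    show "\<exists>C'. finite C' \<and> C' \<subseteq> C \<and> \<Union>C' = topspace (subtopology (topology_generated_by S) U_cl)"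
    proof (cases "s \<in> {{F. F \<inter> G \<noteq> {}} | G. open G}")
      case True
      then obtain G where G: "open G" "s = {F. F \<inter> G \<noteq> {}}" by blast
      then have "G \<in> Gs" using c s unfolding Gs_def by blast
      moreover have "F0 \<inter> G \<noteq> {}" using c s G by blast
      then obtain x t where "(x,t) \<in> F0" "(x,t) \<in> G" by auto
      ultimately have False using F0I by blast
      then show ?thesis ..
    next
      case False
      then have "s \<in> {{F. F \<inter> K = {}} | K. compact K}" using s(1) unfolding S_def by blast
      then obtain K where K: "compact K" "s = {F. F \<inter> K = {}}" by blast
      then have F0K: "F0 \<inter> K = {}" using c s by blast
      have Kcov: "K \<subseteq> (\<Union>G\<in>Gs. up G)"
      proof
        fix p assume "p \<in> K"
        then obtain x t where p: "p = (x,t)" "(x,t) \<in> K" by (cases p) auto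
        then have "(x,t) \<notin> F0" using F0K by blast
        then obtain s' G where "s' \<le> t" "G \<in> Gs" "(x,s') \<in> G" using F0I by blast
        then show "p \<in> (\<Union>G\<in>Gs. up G)" unfolding up_def using p by blast
      qed
      have "\<And>G. G \<in> Gs \<Longrightarrow> open (up G)" using upo unfolding Gs_def by blast
      then obtain D where D: "D \<subseteq> Gs" "finite D" "K \<subseteq> (\<Union>G\<in>D. up G)"
        using compactE_image[OF K(1) _ Kcov] by blast
      define C' where "C' = insert c ((\<lambda>G. {F. F \<inter> G \<noteq> {}} \<inter> U_cl) ` D)"
      have "finite C'" using D(2) unfolding C'_def by simp
      moreover have "C' \<subseteq> C" using D(1) c(1) unfolding Gs_def C'_def by blast
      moreover have "\<Union>C' = U_cl"
      proof
        show "\<Union>C' \<subseteq> U_cl" using \<open>C' \<subseteq> C\<close> CU by blast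
      next
        show "U_cl \<subseteq> \<Union>C'"
        proof
          fix A :: "((real^'n) \<times> ereal) set" assume A: "A \<in> U_cl"
          show "A \<in> \<Union>C'"
          proof (cases "A \<inter> K = {}")
            case True
            then have "A \<in> c" using A K(2) s(2) by blast
            then show ?thesis unfolding C'_def by blast
          next
            case False
            then obtain x t where xt: "(x,t) \<in> A" "(x,t) \<in> K" by auto
            then obtain G where G: "G \<in> D" "(x,t) \<in> up G" using D(3) by blast
            then obtain s' where s': "s' \<le> t" "(x,s') \<in> G" unfolding up_def by blast
            have "{x} \<times> {-\<infinity>..t} \<subseteq> A" using A xt(1) unfolding U_cl_def by blast
            then have "(x,s') \<in> A" using s'(1) by auto
            then have "A \<in> {F. F \<inter> G \<noteq> {}} \<inter> U_cl" using A s'(2) by blast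
            then show ?thesis using G(1) unfolding C'_def by blast
          qed
        qed
      qed
      ultimately show ?thesis using tsp by auto
    qed
  qed
qed

theorem proposition2p1:
  shows "compact_space (Phi_usc_topology :: ((real^'n) set \<times> ((real^'n) \<Rightarrow> ereal)) topology)"
proof -
  let ?S = "{{F. F \<inter> K = {}} | K. compact K} \<union> {{F. F \<inter> G \<noteq> {}} | G. open G} :: ((real^'n) \<times> ereal) set set set"
  have "{F. F \<inter> {} = {}} \<in> {{F. F \<inter> K = {}} | K. compact (K::((real^'n) \<times> ereal) set)}"
    by (rule CollectI, rule exI[of _ "{}"]) auto
  then have mem: "{F. F \<inter> {} = {}} \<in> ?S" by (rule UnI1)
  have "UNIV = \<Union>?S"
  proof (rule UNIV_eq_I)
    fix F :: "((real^'n) \<times> ereal) set"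
    show "F \<in> \<Union>?S" by (rule UnionI[OF mem]) simp
  qed
  then have US: "\<Union>?S = UNIV" by (rule sym)
  have sub: "U_cl \<subseteq> {F :: ((real^'n) \<times> ereal) set. closed F}" unfolding U_cl_def by auto
  have sub2: "{F :: ((real^'n) \<times> ereal) set. closed F} \<inter> U_cl = U_cl" using sub by blast
  have eq: "subtopology fell_topology U_cl = subtopology (topology_generated_by ?S) U_cl"
    unfolding fell_topology_def subtopology_subtopology sub2 ..
  have "compact_space (subtopology fell_topology (U_cl :: ((real^'n) \<times> ereal) set set))"
    unfolding eq by (rule Ucl_compact)
  moreover have "topspace (subtopology fell_topology (U_cl :: ((real^'n) \<times> ereal) set set)) \<subseteq> tau ` Phi_usc"
  proof -
    have "topspace (subtopology (topology_generated_by ?S) U_cl) = U_cl"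
      by (simp only: topspace_subtopology topology_generated_by_topspace US Int_UNIV_left)
    then show ?thesis unfolding eq using U_cl_surj by (rule ssubst)
  qed
  ultimately show ?thesis unfolding Phi_usc_topology_def by (rule compact_space_pullback)
qed

end
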